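(* Under the Markov-modulated setting, assume in addition that the chain is reversible, $\pi(x)P(x,y)=\pi(y)P(y,x)$ for all $x,y$. Let $1=\lambda_1\ge\lambda_2\ge\dots\ge\lambda_K>-1$ be the eigenvalues of $P$ ($K=|\mathcal{X}|$) with real eigenfunctions $f_1\equiv1,f_2,\dots,f_K$ forming an orthonormal basis with respect to $\langle f,g\rangle_\pi=\sum_{x}\pi(x)f(x)g(x)$, and let $\lambda_*=\max\{|\lambda_j|:2\le j\le K\}$. Define $$R=\sum_{z\in\mathcal{Z}:\,\sum_y\pi(y)r_y(z)>0}\frac{\sum_{y\in\mathcal{X}}\pi(y)r_y(z)^2}{\sum_{y\in\mathcal{X}}\pi(y)r_y(z)}.$$ Then $1\le R\le K$, and for every $x\in\mathcal{X}$, $n\ge0$, $L\ge0$, $$D_n(L)\le\frac12\Big(\sum_{j=2}^K\lambda_j^{2L}f_j(x)^2\Big)^{1/2}\sqrt2\,(R-1)^{1/2},$$ and consequently $$D_n(L)\le\frac12\lambda_*^L\Big(\frac1{\pi(x)}-1\Big)^{1/2}\sqrt2\,(R-1)^{1/2}.$$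
   Context: Markov-modulated setting: $(X_n)_{n\ge0}$ is a discrete-time, time-homogeneous Markov chain on a finite state space $\mathcal{X}$ with transition matrix $P$ ($P^L$ its $L$-th power), irreducible and aperiodic with stationary distribution $\pi$, started in stationarity ($X_0\sim\pi$). $(Z_n)_{n\ge0}$ take values in a countable set $\mathcal{Z}$ with $\Pr(Z_n=z\mid X_0,\dots,X_n,Z_0,\dots,Z_{n-1})=r_{X_n}(z)$ for a fixed family of pmfs $(r_y)_{y\in\mathcal{X}}$. $\|p-q\|_{TV}=\frac12\sum_z|p(z)-q(z)|$. Predictability given perfect observation $X_n=x$: $D_n(L)=\|\Pr(Z_{n+L}\in\cdot\mid X_n=x)-\Pr(Z_{n+L}\in\cdot)\|_{TV}$. *)

theory Defs
  imports "HOL-Probability.Probability"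
begin

fun mpow :: "('x::finite \<Rightarrow> 'x \<Rightarrow> real) \<Rightarrow> nat \<Rightarrow> 'x \<Rightarrow> 'x \<Rightarrow> real" where
  "mpow P 0 = (\<lambda>x y. if x = y then 1 else 0)"
| "mpow P (Suc n) = (\<lambda>x y. \<Sum>w\<in>UNIV. mpow P n x w * P w y)"

definition stochastic :: "('x::finite \<Rightarrow> 'x \<Rightarrow> real) \<Rightarrow> bool" where
  "stochastic P \<longleftrightarrow> (\<forall>x y. P x y \<ge> 0) \<and> (\<forall>x. (\<Sum>y\<in>UNIV. P x y) = 1)"

definition irreducible :: "('x::finite \<Rightarrow> 'x \<Rightarrow> real) \<Rightarrow> bool" where
  "irreducible P \<longleftrightarrow> (\<forall>x y. \<exists>n. mpow P n x y > 0)"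

definition aperiodic :: "('x::finite \<Rightarrow> 'x \<Rightarrow> real) \<Rightarrow> bool" where
  "aperiodic P \<longleftrightarrow> (\<forall>x. Gcd {n. n \<ge> 1 \<and> mpow P n x x > 0} = 1)"

definition stationary :: "('x::finite \<Rightarrow> 'x \<Rightarrow> real) \<Rightarrow> ('x \<Rightarrow> real) \<Rightarrow> bool" where
  "stationary P \<pi> \<longleftrightarrow> (\<forall>x. \<pi> x \<ge> 0) \<and> (\<Sum>x\<in>UNIV. \<pi> x) = 1
     \<and> (\<forall>y. \<pi> y = (\<Sum>x\<in>UNIV. \<pi> x * P x y))"

definition reversible :: "('x::finite \<Rightarrow> 'x \<Rightarrow> real) \<Rightarrow> ('x \<Rightarrow> real) \<Rightarrow> bool" where
  "reversible P \<pi> \<longleftrightarrow> (\<forall>x y. \<pi> x * P x y = \<pi> y * P y x)"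

text \<open>Markov-modulated process on a probability space M: X is a Markov chain with
  transition matrix P started in pi; Z n given X_0..X_n, Z_0..Z_{n-1} has law r (X n).\<close>
definition markov_modulated ::
  "'a measure \<Rightarrow> ('x::finite \<Rightarrow> 'x \<Rightarrow> real) \<Rightarrow> ('x \<Rightarrow> real) \<Rightarrow> ('x \<Rightarrow> 'z::countable pmf)
     \<Rightarrow> (nat \<Rightarrow> 'a \<Rightarrow> 'x) \<Rightarrow> (nat \<Rightarrow> 'a \<Rightarrow> 'z) \<Rightarrow> bool" where
  "markov_modulated M P \<pi> r X Z \<longleftrightarrow>
     prob_space M
   \<and> (\<forall>n. X n \<in> measurable M (count_space UNIV))
   \<and> (\<forall>n. Z n \<in> measurable M (count_space UNIV))
   \<and> (\<forall>x. measure M {\<omega>\<in>space M. X 0 \<omega> = x} = \<pi> x)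
   \<and> (\<forall>n (xs::nat \<Rightarrow> 'x).
        measure M {\<omega>\<in>space M. \<forall>i\<le>Suc n. X i \<omega> = xs i}
        = measure M {\<omega>\<in>space M. \<forall>i\<le>n. X i \<omega> = xs i} * P (xs n) (xs (Suc n)))
   \<and> (\<forall>n (xs::nat \<Rightarrow> 'x) (zs::nat \<Rightarrow> 'z) z.
        measure M {\<omega>\<in>space M. (\<forall>i\<le>n. X i \<omega> = xs i) \<and> (\<forall>i<n. Z i \<omega> = zs i) \<and> Z n \<omega> = z}
        = measure M {\<omega>\<in>space M. (\<forall>i\<le>n. X i \<omega> = xs i) \<and> (\<forall>i<n. Z i \<omega> = zs i)}
          * pmf (r (xs n)) z)"

text \<open>D_n(L) at state x: total variation distance between the conditional law of
  Z_{n+L} given X_n = x and the law of Z_{n+L}.\<close>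
definition predictability ::
  "'a measure \<Rightarrow> (nat \<Rightarrow> 'a \<Rightarrow> 'x) \<Rightarrow> (nat \<Rightarrow> 'a \<Rightarrow> 'z) \<Rightarrow> nat \<Rightarrow> nat \<Rightarrow> 'x \<Rightarrow> real" where
  "predictability M X Z n L x =
     (1/2) * (\<Sum>\<^sub>\<infinity>z\<in>UNIV.
        \<bar>measure M {\<omega>\<in>space M. X n \<omega> = x \<and> Z (n+L) \<omega> = z} / measure M {\<omega>\<in>space M. X n \<omega> = x}
         - measure M {\<omega>\<in>space M. Z (n+L) \<omega> = z}\<bar>)"

end

theory Submission
  imports Defs
begin


lemma expand:
  fixes \<pi> :: "'x::finite \<Rightarrow> real" and f :: "nat \<Rightarrow> 'x \<Rightarrow> real"
  assumes pos: "\<And>x. \<pi> x > 0" and K: "K = CARD('x)"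
    and on: "\<And>i j. 1 \<le> i \<Longrightarrow> i \<le> K \<Longrightarrow> 1 \<le> j \<Longrightarrow> j \<le> K \<Longrightarrow>
          (\<Sum>x\<in>UNIV. \<pi> x * f i x * f j x) = (if i = j then 1 else 0)"
  shows "g y = (\<Sum>j=1..K. (\<Sum>y'\<in>UNIV. \<pi> y' * g y' * f j y') * f j y)"
proof -
  define v :: "nat \<Rightarrow> real^'x" where "v j = (\<chi> y. sqrt (\<pi> y) * f j y)" for j
  have sq: "sqrt (\<pi> y) * sqrt (\<pi> y) = \<pi> y" for y using pos[of y] by simp
  have sq2: "sqrt (\<pi> y) * a * (sqrt (\<pi> y) * b) = \<pi> y * a * b" for y a b
    by (metis sq mult.commute mult.left_commute)
  have inner: "v i \<bullet> v j = (if i = j then 1 else 0)" if "i \<in> {1..K}" "j \<in> {1..K}" for i j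
  proof -
    have "v i \<bullet> v j = (\<Sum>x\<in>UNIV. \<pi> x * f i x * f j x)"
      unfolding v_def inner_vec_def by (simp add: sq2)
    then show ?thesis using on that by auto
  qed
  have inj: "inj_on v {1..K}"
    by (rule inj_onI) (metis inner zero_neq_one)
  define S where "S = v ` {1..K}"
  have finS: "finite S" unfolding S_def by simp
  have cardS: "card S = dim (UNIV :: (real^'x) set)"
    unfolding S_def using card_image[OF inj] K by (simp add: dim_UNIV)
  have indep: "independent S"
  proof (rule pairwise_orthogonal_independent)
    show "pairwise orthogonal S" unfolding S_def pairwise_def orthogonal_def
      using inner by (auto simp: image_iff)
    show "0 \<notin> S" unfolding S_def using inner by force
  qed
  have sp: "UNIV \<subseteq> span S" using card_eq_dim[of S UNIV] finS cardS indep by auto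
  define w :: "real^'x" where "w = (\<chi> y. sqrt (\<pi> y) * g y)"
  obtain u where u: "(\<Sum>b\<in>S. u b *\<^sub>R b) = w"
    using sp span_finite[OF finS] by (metis (no_types, lifting) UNIV_I image_iff subsetD)
  have coef: "w \<bullet> b = u b" if "b \<in> S" for b
  proof -
    have "w \<bullet> b = (\<Sum>b'\<in>S. u b' * (b' \<bullet> b))" unfolding u[symmetric]
      by (simp add: inner_sum_left)
    also have "\<dots> = (\<Sum>b'\<in>S. if b' = b then u b else 0)"
      apply (rule sum.cong, simp)
      using that inner unfolding S_def by (auto split: if_splits)
    also have "\<dots> = u b" using that finS by simp
    finally show ?thesis .
  qed
  have "w = (\<Sum>b\<in>S. (w \<bullet> b) *\<^sub>R b)" using u coef by (metis (no_types, lifting) sum.cong)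
  also have "\<dots> = (\<Sum>j=1..K. (w \<bullet> v j) *\<^sub>R v j)"
    unfolding S_def by (subst sum.reindex[OF inj]) simp
  finally have eq: "w = (\<Sum>j=1..K. (w \<bullet> v j) *\<^sub>R v j)" .
  have "w $ y = (\<Sum>j=1..K. (w \<bullet> v j) * (v j $ y))"
    using arg_cong[where f="\<lambda>t. t $ y", OF eq] by simp
  moreover have "w \<bullet> v j = (\<Sum>y'\<in>UNIV. \<pi> y' * g y' * f j y')" for j
    unfolding v_def w_def inner_vec_def by (simp add: sq2)
  ultimately have "sqrt (\<pi> y) * g y = sqrt (\<pi> y) * (\<Sum>j=1..K. (\<Sum>y'\<in>UNIV. \<pi> y' * g y' * f j y') * f j y)"
    unfolding w_def v_def by (simp add: sum_distrib_left algebra_simps)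
  then show ?thesis using pos[of y] by simp
qed


lemma mpow_nonneg: assumes "stochastic P" shows "mpow P n x y \<ge> 0"
  using assms by (induction n arbitrary: y) (auto simp: stochastic_def intro!: sum_nonneg)

lemma mpow_stat: assumes "stationary P \<pi>" shows "(\<Sum>x\<in>UNIV. \<pi> x * mpow P n x y) = \<pi> y"
proof (induction n arbitrary: y)
  case 0
  have "(\<Sum>x\<in>UNIV. \<pi> x * mpow P 0 x y) = (\<Sum>x\<in>UNIV. if x = y then \<pi> x else 0)"
    by (rule sum.cong) auto
  then show ?case by simp
next
  case (Suc n)
  have "(\<Sum>x\<in>UNIV. \<pi> x * mpow P (Suc n) x y) = (\<Sum>x\<in>UNIV. \<Sum>w\<in>UNIV. \<pi> x * mpow P n x w * P w y)"
    by (simp add: sum_distrib_left mult.assoc)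
  also have "\<dots> = (\<Sum>w\<in>UNIV. (\<Sum>x\<in>UNIV. \<pi> x * mpow P n x w) * P w y)"
    by (subst sum.swap) (simp add: sum_distrib_right)
  also have "\<dots> = (\<Sum>w\<in>UNIV. \<pi> w * P w y)" using Suc by simp
  also have "\<dots> = \<pi> y" using assms unfolding stationary_def by metis
  finally show ?case .
qed

lemma pi_pos:
  assumes st: "stochastic P" and irr: "irreducible P" and stat: "stationary P \<pi>"
  shows "\<pi> y > 0"
proof -
  have nn: "\<pi> x \<ge> 0" for x using stat unfolding stationary_def by blast
  have "(\<Sum>x\<in>UNIV. \<pi> x) = 1" using stat unfolding stationary_def by blast
  moreover have "\<exists>x0. \<pi> x0 > 0"
  proof (rule ccontr)
    assume "\<not> (\<exists>x0. \<pi> x0 > 0)"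
    then have "\<forall>x. \<pi> x \<le> 0" by (simp add: not_less)
    then have "(\<Sum>x\<in>UNIV. \<pi> x) \<le> 0" by (simp add: sum_nonpos)
    then show False using calculation by simp
  qed
  ultimately obtain x0 where x0: "\<pi> x0 > 0" by blast
  obtain n where n: "mpow P n x0 y > 0" using irr unfolding irreducible_def by blast
  have "\<pi> x0 * mpow P n x0 y \<le> (\<Sum>x\<in>UNIV. \<pi> x * mpow P n x y)"
    by (rule member_le_sum) (auto intro!: mult_nonneg_nonneg nn mpow_nonneg[OF st])
  moreover have "0 < \<pi> x0 * mpow P n x0 y" using x0 n by simp
  ultimately show ?thesis using mpow_stat[OF stat, of n y] by linarith
qed

lemma eigen_iter:
  assumes "\<And>x. (\<Sum>y\<in>UNIV. P x y * g y) = l * g x"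
  shows "(\<Sum>y\<in>UNIV. mpow P n x y * g y) = l ^ n * g x"
proof (induction n arbitrary: x)
  case 0
  have "(\<Sum>y\<in>UNIV. mpow P 0 x y * g y) = (\<Sum>y\<in>UNIV. if x = y then g y else 0)"
    by (rule sum.cong) auto
  then show ?case by simp
next
  case (Suc n)
  have "(\<Sum>y\<in>UNIV. mpow P (Suc n) x y * g y) = (\<Sum>y\<in>UNIV. \<Sum>w\<in>UNIV. mpow P n x w * P w y * g y)"
    by (simp add: sum_distrib_right)
  also have "\<dots> = (\<Sum>w\<in>UNIV. mpow P n x w * (\<Sum>y\<in>UNIV. P w y * g y))"
    by (subst sum.swap) (simp add: sum_distrib_left mult.assoc)
  also have "\<dots> = (\<Sum>w\<in>UNIV. mpow P n x w * g w * l)" using assms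
    by (simp add: mult_ac)
  also have "\<dots> = (\<Sum>w\<in>UNIV. mpow P n x w * g w) * l"
    by (simp add: sum_distrib_right)
  also have "\<dots> = l ^ Suc n * g x" using Suc by simp
  finally show ?case .
qed

lemma ortho_quad:
  fixes \<pi> :: "'x::finite \<Rightarrow> real"
  assumes fin: "finite J"
    and on: "\<And>i j. i \<in> J \<Longrightarrow> j \<in> J \<Longrightarrow> (\<Sum>x\<in>UNIV. \<pi> x * f i x * f j x) = (if i = j then 1 else 0)"
  shows "(\<Sum>w\<in>UNIV. \<pi> w * (\<Sum>j\<in>J. c j * f j w)\<^sup>2) = (\<Sum>j\<in>J. (c j)\<^sup>2)"
proof -
  have "(\<Sum>w\<in>UNIV. \<pi> w * (\<Sum>j\<in>J. c j * f j w)\<^sup>2)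
      = (\<Sum>w\<in>UNIV. \<Sum>i\<in>J. \<Sum>j\<in>J. c i * c j * (\<pi> w * f i w * f j w))"
    by (simp add: power2_eq_square sum_product sum_distrib_left mult_ac)
  also have "\<dots> = (\<Sum>i\<in>J. \<Sum>j\<in>J. c i * c j * (\<Sum>w\<in>UNIV. \<pi> w * f i w * f j w))"
    by (subst sum.swap) (simp add: sum_distrib_left sum.swap[where A=UNIV])
  also have "\<dots> = (\<Sum>i\<in>J. \<Sum>j\<in>J. if i = j then c i * c j else 0)"
    using on by (intro sum.cong refl) simp
  also have "\<dots> = (\<Sum>j\<in>J. (c j)\<^sup>2)" using fin by (simp add: power2_eq_square)
  finally show ?thesis .
qed



lemma has_sum_sumf:
  fixes f :: "'i \<Rightarrow> 'z \<Rightarrow> real"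
  assumes "finite I" "\<And>i. i \<in> I \<Longrightarrow> (f i has_sum s i) A"
  shows "((\<lambda>z. \<Sum>i\<in>I. f i z) has_sum (\<Sum>i\<in>I. s i)) A"
  using assms by (induction I rule: finite_induct) (auto intro: has_sum_add)

lemma pmf_has_sum: "(pmf p has_sum 1) UNIV"
proof -
  have "infsetsum (pmf p) UNIV = 1" by (rule infsetsum_pmf_eq_1) simp
  moreover have "infsetsum (pmf p) UNIV = infsum (pmf p) UNIV"
    by (rule infsetsum_infsum) (rule pmf_abs_summable)
  moreover have "pmf p summable_on UNIV"
    using summable_on_iff_abs_summable_on_real abs_summable_equivalent pmf_abs_summable by blast
  ultimately show ?thesis by (metis has_sum_infsum)
qed

lemma amgm: fixes x y t :: real assumes "x \<ge> 0" "y \<ge> 0" "t > 0"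
  shows "sqrt (x * y) \<le> (t * x + y / t) / 2"
proof -
  have "x * y \<le> ((t * x + y / t) / 2)\<^sup>2"
  proof -
    have "((t * x + y / t) / 2)\<^sup>2 - x * y = ((t * x - y / t) / 2)\<^sup>2"
      using assms by (simp add: power2_eq_square field_simps)
    then show ?thesis by (metis diff_ge_0_iff_ge zero_le_power2)
  qed
  moreover have "0 \<le> (t * x + y / t) / 2" using assms by simp
  ultimately show ?thesis by (metis abs_of_nonneg real_sqrt_abs real_sqrt_le_mono)
qed

lemma opt_t:
  fixes S a c :: real
  assumes a: "a \<ge> 0" and c: "c \<ge> 0" and le: "\<And>t. t > 0 \<Longrightarrow> S \<le> a * ((t + c / t) / 2)"
  shows "S \<le> a * sqrt c"
proof (cases "c > 0")
  case True
  have "S \<le> a * ((sqrt c + c / sqrt c) / 2)" using le[of "sqrt c"] True by simp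
  also have "(sqrt c + c / sqrt c) / 2 = sqrt c" using True
    by (simp add: real_div_sqrt)
  finally show ?thesis .
next
  case False
  then have c0: "c = 0" using c by simp
  show ?thesis
  proof (rule ccontr)
    assume "\<not> S \<le> a * sqrt c"
    then have S: "S > 0" using c0 by simp
    show False
    proof (cases "a = 0")
      case True then show False using le[of 1] S by simp
    next
      case False
      then have "a > 0" using a by simp
      then have "S \<le> a * ((S / a) / 2)" using le[of "S / a"] S c0 by simp
      then show False using S \<open>a > 0\<close> by (simp add: field_simps)
    qed
  qed
qed


lemma tv_main:
  fixes \<pi> :: "'x::finite \<Rightarrow> real" and r :: "'x \<Rightarrow> 'z pmf" and h :: "'x \<Rightarrow> real"
  assumes pos: "\<And>y. \<pi> y > 0" and s1: "(\<Sum>y\<in>UNIV. \<pi> y) = 1" and h0: "(\<Sum>y\<in>UNIV. \<pi> y * h y) = 0"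
  defines "q \<equiv> \<lambda>z. \<Sum>y\<in>UNIV. \<pi> y * pmf (r y) z"
    and "A \<equiv> \<lambda>z. \<Sum>y\<in>UNIV. \<pi> y * (pmf (r y) z)\<^sup>2"
    and "H \<equiv> \<Sum>y\<in>UNIV. \<pi> y * (h y)\<^sup>2"
  defines "R \<equiv> infsum (\<lambda>z. A z / q z) {z. q z > 0}"
  shows "1 \<le> R \<and> R \<le> real CARD('x)
     \<and> infsum (\<lambda>z. \<bar>\<Sum>y\<in>UNIV. \<pi> y * h y * pmf (r y) z\<bar>) UNIV \<le> sqrt H * sqrt (R - 1)"
proof -
  define a where "a y z = pmf (r y) z" for y z
  define u where "u z = (\<Sum>y\<in>UNIV. a y z)" for z
  define g where "g z = A z / q z" for z
  define d where "d z = (\<Sum>y\<in>UNIV. \<pi> y * h y * a y z)" for z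
  have a0: "a y z \<ge> 0" for y z unfolding a_def by simp
  have pnn: "\<pi> y \<ge> 0" for y using pos[of y] by simp
  have u_sum: "(u has_sum real CARD('x)) UNIV"
  proof -
    have "((\<lambda>z. \<Sum>y\<in>UNIV. a y z) has_sum (\<Sum>y\<in>(UNIV::'x set). 1)) UNIV"
      by (rule has_sum_sumf) (auto simp: a_def pmf_has_sum)
    then show ?thesis unfolding u_def by simp
  qed
  have q_sum: "(q has_sum 1) UNIV"
  proof -
    have "((\<lambda>z. \<Sum>y\<in>UNIV. \<pi> y * a y z) has_sum (\<Sum>y\<in>UNIV. \<pi> y * 1)) UNIV"
      apply (rule has_sum_sumf, simp)
      subgoal for y using has_sum_cmult_right[OF pmf_has_sum[of "r y"], of "\<pi> y"] by (simp add: a_def)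
      done
    then show ?thesis unfolding q_def a_def using s1 by simp
  qed
  have qa: "q z = (\<Sum>y\<in>UNIV. \<pi> y * a y z)" for z unfolding q_def a_def ..
  have Aa: "A z = (\<Sum>y\<in>UNIV. \<pi> y * (a y z)\<^sup>2)" for z unfolding A_def a_def ..
  have q0: "q z \<ge> 0" for z unfolding qa by (auto intro!: sum_nonneg mult_nonneg_nonneg pnn a0)
  have k1: "A z - (q z)\<^sup>2 = (\<Sum>y\<in>UNIV. \<pi> y * (a y z - q z)\<^sup>2)" for z
  proof -
    have "(\<Sum>y\<in>UNIV. \<pi> y * (a y z - q z)\<^sup>2)
        = (\<Sum>y\<in>UNIV. \<pi> y * (a y z)\<^sup>2) - 2 * q z * (\<Sum>y\<in>UNIV. \<pi> y * a y z) + (q z)\<^sup>2 * (\<Sum>y\<in>UNIV. \<pi> y)"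
      by (simp add: power2_eq_square algebra_simps sum.distrib sum_subtractf sum_distrib_left sum_distrib_right)
    then show ?thesis using s1 unfolding Aa qa[symmetric] by (simp add: power2_eq_square)
  qed
  have k1': "A z - (q z)\<^sup>2 \<ge> 0" for z unfolding k1 by (auto intro!: sum_nonneg mult_nonneg_nonneg pnn)
  have k3: "A z = 0" if "q z = 0" for z
  proof -
    have "\<forall>y\<in>UNIV. \<pi> y * a y z = 0"
      using that unfolding qa by (subst sum_nonneg_eq_0_iff[symmetric]) (auto intro!: mult_nonneg_nonneg pnn a0)
    then have "a y z = 0" for y using pos[of y] by (metis UNIV_I less_irrefl mult_eq_0_iff)
    then show ?thesis unfolding Aa by simp
  qed
  have au: "a y z \<le> u z" for y z unfolding u_def by (rule member_le_sum) (auto simp: a0)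
  have k4: "g z \<le> u z" for z
  proof (cases "q z = 0")
    case True then show ?thesis unfolding g_def u_def by (auto intro!: sum_nonneg a0)
  next
    case False
    then have qp: "q z > 0" using q0[of z] by simp
    have "A z \<le> (\<Sum>y\<in>UNIV. \<pi> y * a y z * u z)" unfolding Aa
    proof (rule sum_mono)
      fix y
      have "a y z * a y z \<le> a y z * u z" by (rule mult_left_mono[OF au a0])
      then have "\<pi> y * (a y z * a y z) \<le> \<pi> y * (a y z * u z)" by (rule mult_left_mono[OF _ pnn])
      then show "\<pi> y * (a y z)\<^sup>2 \<le> \<pi> y * a y z * u z" by (simp add: power2_eq_square mult.assoc)
    qed
    also have "\<dots> = q z * u z" unfolding qa by (simp add: sum_distrib_right)
    finally show ?thesis unfolding g_def using qp by (simp add: divide_le_eq mult.commute)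
  qed
  have k5: "q z \<le> g z" for z
  proof (cases "q z = 0")
    case True then show ?thesis unfolding g_def by simp
  next
    case False
    then have qp: "q z > 0" using q0[of z] by simp
    have "q z * q z \<le> A z" using k1'[of z] by (simp add: power2_eq_square)
    then show ?thesis unfolding g_def using qp by (simp add: le_divide_eq)
  qed
  have g0: "g z \<ge> 0" for z using k5 q0 order_trans by blast
  have g_summ: "g summable_on UNIV"
    by (rule summable_on_comparison_test[OF has_sum_imp_summable[OF u_sum]]) (auto simp: k4 g0)
  have R_eq: "R = infsum g UNIV"
    unfolding R_def g_def by (rule infsum_cong_neutral) (auto simp: less_le q0)
  have g_sum: "(g has_sum R) UNIV" unfolding R_eq using g_summ by simp
  have R1: "1 \<le> R" using has_sum_mono[OF q_sum g_sum] k5 by blast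
  have RK: "R \<le> real CARD('x)" using has_sum_mono[OF g_sum u_sum] k4 by blast
  have k7: "\<bar>d z\<bar> \<le> sqrt H * sqrt (A z - (q z)\<^sup>2)" for z
  proof -
    have sq2: "sqrt (\<pi> y) * b * (sqrt (\<pi> y) * c) = \<pi> y * b * c" for y b c
    proof -
      have "sqrt (\<pi> y) * sqrt (\<pi> y) = \<pi> y" using pnn[of y] by simp
      then show ?thesis by (metis mult.commute mult.left_commute)
    qed
    have sq3: "(sqrt (\<pi> y) * b)\<^sup>2 = \<pi> y * b\<^sup>2" for y b
      using pnn[of y] by (simp add: power_mult_distrib)
    have "d z = (\<Sum>y\<in>UNIV. \<pi> y * h y * a y z) - q z * (\<Sum>y\<in>UNIV. \<pi> y * h y)"
      unfolding d_def h0 by simp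
    also have "\<dots> = (\<Sum>y\<in>UNIV. \<pi> y * h y * (a y z - q z))"
      by (simp add: sum_distrib_left algebra_simps sum_subtractf)
    also have "\<dots> = (\<Sum>y\<in>UNIV. (sqrt (\<pi> y) * h y) * (sqrt (\<pi> y) * (a y z - q z)))"
      by (simp add: sq2)
    finally have dz: "d z = \<dots>" .
    have "(d z)\<^sup>2 \<le> (\<Sum>y\<in>UNIV. (sqrt (\<pi> y) * h y)\<^sup>2) * (\<Sum>y\<in>UNIV. (sqrt (\<pi> y) * (a y z - q z))\<^sup>2)"
      unfolding dz by (rule Cauchy_Schwarz_ineq_sum)
    also have "\<dots> = H * (A z - (q z)\<^sup>2)" unfolding H_def k1 sq3 ..
    finally have "(d z)\<^sup>2 \<le> H * (A z - (q z)\<^sup>2)" .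
    then have "sqrt ((d z)\<^sup>2) \<le> sqrt (H * (A z - (q z)\<^sup>2))" by (rule real_sqrt_le_mono)
    then show ?thesis by (simp add: real_sqrt_mult)
  qed
  define b where "b t z = (t / 2 - 1 / (2 * t)) * q z + (1 / (2 * t)) * g z" for t z
  have k8: "sqrt (A z - (q z)\<^sup>2) \<le> b t z" if t: "t > 0" for t z
  proof (cases "q z = 0")
    case True
    then show ?thesis using k3[OF True] unfolding b_def g_def by simp
  next
    case False
    then have qp: "q z > 0" using q0[of z] by simp
    have "A z - (q z)\<^sup>2 = q z * (g z - q z)" unfolding g_def using qp
      by (simp add: field_simps power2_eq_square)
    then have "sqrt (A z - (q z)\<^sup>2) = sqrt (q z * (g z - q z))" by simp
    also have "\<dots> \<le> (t * q z + (g z - q z) / t) / 2"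
      by (rule amgm) (use qp k5[of z] t in auto)
    also have "\<dots> = b t z" unfolding b_def using t by (simp add: field_simps)
    finally show ?thesis .
  qed
  have b_sum: "(b t has_sum (t / 2 - 1 / (2 * t)) * 1 + (1 / (2 * t)) * R) UNIV" for t
    unfolding b_def by (intro has_sum_add has_sum_cmult_right q_sum g_sum)
  have Hn: "H \<ge> 0" unfolding H_def by (auto intro!: sum_nonneg mult_nonneg_nonneg pnn)
  have dle: "\<bar>d z\<bar> \<le> sqrt H * b t z" if "t > 0" for t z
    using k7[of z] k8[OF that, of z] Hn by (meson mult_left_mono order_trans real_sqrt_ge_zero)
  have d_summ: "(\<lambda>z. \<bar>d z\<bar>) summable_on UNIV"
  proof (rule summable_on_comparison_test)
    show "(\<lambda>z. sqrt H * b 1 z) summable_on UNIV"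
      using has_sum_cmult_right[OF b_sum[of 1]] has_sum_imp_summable by blast
  qed (auto simp: dle)
  have main: "infsum (\<lambda>z. \<bar>d z\<bar>) UNIV \<le> sqrt H * ((t + (R - 1) / t) / 2)" if t: "t > 0" for t
  proof -
    have "infsum (\<lambda>z. \<bar>d z\<bar>) UNIV \<le> sqrt H * ((t / 2 - 1 / (2 * t)) * 1 + (1 / (2 * t)) * R)"
      using has_sum_mono[OF has_sum_infsum[OF d_summ] has_sum_cmult_right[OF b_sum[of t]]] dle[OF t] by blast
    also have "(t / 2 - 1 / (2 * t)) * 1 + (1 / (2 * t)) * R = (t + (R - 1) / t) / 2"
      using t by (simp add: field_simps)
    finally show ?thesis .
  qed
  have "infsum (\<lambda>z. \<bar>d z\<bar>) UNIV \<le> sqrt H * sqrt (R - 1)"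
    by (rule opt_t) (use main R1 Hn in auto)
  then show ?thesis using R1 RK unfolding d_def a_def by simp
qed



locale mm =
  fixes M :: "'a measure" and P :: "'x::finite \<Rightarrow> 'x \<Rightarrow> real" and \<pi> :: "'x \<Rightarrow> real"
    and r :: "'x \<Rightarrow> 'z::countable pmf" and X :: "nat \<Rightarrow> 'a \<Rightarrow> 'x" and Z :: "nat \<Rightarrow> 'a \<Rightarrow> 'z"
  assumes model: "markov_modulated M P \<pi> r X Z"
begin

lemma ps: "prob_space M" using model unfolding markov_modulated_def by blast
lemma Xm[measurable]: "X n \<in> measurable M (count_space UNIV)" using model unfolding markov_modulated_def by blast
lemma Zm[measurable]: "Z n \<in> measurable M (count_space UNIV)" using model unfolding markov_modulated_def by blast
lemma X0: "measure M {\<omega>\<in>space M. X 0 \<omega> = x} = \<pi> x" using model unfolding markov_modulated_def by blast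
lemma Xstep: "measure M {\<omega>\<in>space M. \<forall>i\<le>Suc n. X i \<omega> = xs i}
        = measure M {\<omega>\<in>space M. \<forall>i\<le>n. X i \<omega> = xs i} * P (xs n) (xs (Suc n))"
  using model unfolding markov_modulated_def by blast
lemma Zstep: "measure M {\<omega>\<in>space M. (\<forall>i\<le>n. X i \<omega> = xs i) \<and> (\<forall>i<n. Z i \<omega> = zs i) \<and> Z n \<omega> = z}
        = measure M {\<omega>\<in>space M. (\<forall>i\<le>n. X i \<omega> = xs i) \<and> (\<forall>i<n. Z i \<omega> = zs i)}
          * pmf (r (xs n)) z"
  using model unfolding markov_modulated_def by blast

lemma meas1: "{\<omega>\<in>space M. \<forall>i\<le>m. X i \<omega> = xs i} \<in> sets M"
  by measurable
lemma meas2: "{\<omega>\<in>space M. (\<forall>i\<le>m. X i \<omega> = xs i) \<and> (\<forall>i<k. Z i \<omega> = zs i)} \<in> sets M"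
  by measurable
lemma meas3: "{\<omega>\<in>space M. \<forall>i\<le>m. X i \<omega> \<in> c i} \<in> sets M"
  by measurable


sublocale prob_space M by (rule ps)

lemma G:
  assumes hQ: "{\<omega>\<in>space M. Q \<omega>} \<in> sets M"
  shows "measure M {\<omega>\<in>space M. (\<forall>i\<le>m. X i \<omega> \<in> c i) \<and> Q \<omega>}
       = (\<Sum>xs\<in>PiE {..m} c. measure M {\<omega>\<in>space M. (\<forall>i\<le>m. X i \<omega> = xs i) \<and> Q \<omega>})"
proof -
  define A where "A xs = {\<omega>\<in>space M. (\<forall>i\<le>m. X i \<omega> = xs i) \<and> Q \<omega>}" for xs
  have eq: "{\<omega>\<in>space M. (\<forall>i\<le>m. X i \<omega> \<in> c i) \<and> Q \<omega>} = (\<Union>xs\<in>PiE {..m} c. A xs)"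
  proof (intro equalityI subsetI)
    fix \<omega> assume w: "\<omega> \<in> {\<omega>\<in>space M. (\<forall>i\<le>m. X i \<omega> \<in> c i) \<and> Q \<omega>}"
    define xs where "xs = restrict (\<lambda>i. X i \<omega>) {..m}"
    have "xs \<in> PiE {..m} c" using w unfolding xs_def by auto
    moreover have "\<omega> \<in> A xs" using w unfolding xs_def A_def by auto
    ultimately show "\<omega> \<in> (\<Union>xs\<in>PiE {..m} c. A xs)" by blast
  qed (auto simp: A_def PiE_def Pi_def)
  have AS: "A ` PiE {..m} c \<subseteq> sets M"
  proof
    fix B assume "B \<in> A ` PiE {..m} c"
    then obtain xs where B: "B = A xs" by blast
    have "A xs = {\<omega>\<in>space M. \<forall>i\<le>m. X i \<omega> = xs i} \<inter> {\<omega>\<in>space M. Q \<omega>}"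
      unfolding A_def by auto
    then show "B \<in> sets M" using B meas1 hQ by auto
  qed
  have dj: "disjoint_family_on A (PiE {..m} c)"
    unfolding disjoint_family_on_def
  proof (intro ballI impI)
    fix xs ys assume "xs \<in> PiE {..m} c" "ys \<in> PiE {..m} c" "xs \<noteq> ys"
    then obtain i where "i \<le> m" "xs i \<noteq> ys i" by (metis PiE_ext atMost_iff)
    then show "A xs \<inter> A ys = {}" unfolding A_def by auto
  qed
  have fin: "finite (PiE {..m} c)" by (rule finite_PiE) auto
  show ?thesis unfolding eq
    by (subst measure_finite_Union[OF fin AS dj]) (auto simp: A_def)
qed

lemma Fac:
  assumes hQ: "{\<omega>\<in>space M. Q \<omega>} \<in> sets M"
    and fac: "\<And>xs. measure M {\<omega>\<in>space M. (\<forall>i\<le>m. X i \<omega> = xs i) \<and> Q \<omega>}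
       = measure M {\<omega>\<in>space M. \<forall>i\<le>m. X i \<omega> = xs i} * g (xs m)"
  shows "measure M {\<omega>\<in>space M. (\<forall>i\<le>m. X i \<omega> \<in> c i) \<and> Q \<omega>}
       = (\<Sum>w\<in>UNIV. measure M {\<omega>\<in>space M. (\<forall>i\<le>m. X i \<omega> \<in> c i) \<and> X m \<omega> = w} * g w)"
proof -
  define PE where "PE = PiE {..m} c"
  have fin: "finite PE" unfolding PE_def by (rule finite_PiE) auto
  define pm where "pm xs = measure M {\<omega>\<in>space M. \<forall>i\<le>m. X i \<omega> = xs i}" for xs
  have "measure M {\<omega>\<in>space M. (\<forall>i\<le>m. X i \<omega> \<in> c i) \<and> Q \<omega>} = (\<Sum>xs\<in>PE. pm xs * g (xs m))"
    unfolding PE_def pm_def by (subst G[OF hQ]) (simp add: fac)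
  also have "\<dots> = (\<Sum>w\<in>UNIV. \<Sum>xs\<in>{xs\<in>PE. xs m = w}. pm xs * g (xs m))"
    by (rule sum.group[symmetric]) (auto simp: fin)
  also have "\<dots> = (\<Sum>w\<in>UNIV. (\<Sum>xs\<in>{xs\<in>PE. xs m = w}. pm xs) * g w)"
    by (auto intro!: sum.cong simp: sum_distrib_right)
  also have "\<dots> = (\<Sum>w\<in>UNIV. measure M {\<omega>\<in>space M. (\<forall>i\<le>m. X i \<omega> \<in> c i) \<and> X m \<omega> = w} * g w)"
  proof (rule sum.cong, simp)
    fix w
    have "measure M {\<omega>\<in>space M. (\<forall>i\<le>m. X i \<omega> \<in> c i) \<and> X m \<omega> = w}
        = (\<Sum>xs\<in>PE. measure M {\<omega>\<in>space M. (\<forall>i\<le>m. X i \<omega> = xs i) \<and> X m \<omega> = w})"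
      unfolding PE_def by (rule G) measurable
    also have "\<dots> = (\<Sum>xs\<in>PE. if xs m = w then pm xs else 0)"
      unfolding pm_def
    proof (intro sum.cong refl)
      fix xs assume "xs \<in> PE"
      show "measure M {\<omega>\<in>space M. (\<forall>i\<le>m. X i \<omega> = xs i) \<and> X m \<omega> = w}
          = (if xs m = w then measure M {\<omega>\<in>space M. \<forall>i\<le>m. X i \<omega> = xs i} else 0)"
      proof (cases "xs m = w")
        case True
        then have "{\<omega>\<in>space M. (\<forall>i\<le>m. X i \<omega> = xs i) \<and> X m \<omega> = w} = {\<omega>\<in>space M. \<forall>i\<le>m. X i \<omega> = xs i}"
          by auto
        then show ?thesis using True by simp
      next
        case False
        then have "{\<omega>\<in>space M. (\<forall>i\<le>m. X i \<omega> = xs i) \<and> X m \<omega> = w} = {}"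
          by auto
        then show ?thesis using False by (metis measure_empty)
      qed
    qed
    also have "\<dots> = (\<Sum>xs\<in>{xs\<in>PE. xs m = w}. pm xs)"
      using fin by (simp add: sum.inter_filter)
    finally show "(\<Sum>xs\<in>{xs\<in>PE. xs m = w}. pm xs) * g w = measure M {\<omega>\<in>space M. (\<forall>i\<le>m. X i \<omega> \<in> c i) \<and> X m \<omega> = w} * g w"
      by simp
  qed
  finally show ?thesis .
qed

lemma split_Z:
  assumes hQ: "{\<omega>\<in>space M. Q \<omega>} \<in> sets M"
  shows "emeasure M {\<omega>\<in>space M. Q \<omega>}
       = (\<integral>\<^sup>+w. emeasure M {\<omega>\<in>space M. Q \<omega> \<and> Z k \<omega> = w} \<partial>count_space UNIV)"
proof -
  have eq: "{\<omega>\<in>space M. Q \<omega>} = \<Union>((\<lambda>w. {\<omega>\<in>space M. Q \<omega> \<and> Z k \<omega> = w}) ` UNIV)"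
    by auto
  have ms: "{\<omega>\<in>space M. Q \<omega> \<and> Z k \<omega> = w} \<in> sets M" for w
  proof -
    have "{\<omega>\<in>space M. Q \<omega> \<and> Z k \<omega> = w} = {\<omega>\<in>space M. Q \<omega>} \<inter> {\<omega>\<in>space M. Z k \<omega> = w}" by auto
    moreover have "{\<omega>\<in>space M. Z k \<omega> = w} \<in> sets M" by measurable
    ultimately show ?thesis using hQ by auto
  qed
  show ?thesis
    apply (subst eq)
    apply (rule emeasure_UN_countable)
    using ms by (auto simp: disjoint_family_on_def)
qed

lemma ZA: "measure M {\<omega>\<in>space M. (\<forall>i\<le>m. X i \<omega> = xs i) \<and> Z m \<omega> = z}
   = measure M {\<omega>\<in>space M. \<forall>i\<le>m. X i \<omega> = xs i} * pmf (r (xs m)) z"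
proof -
  define p where "p = pmf (r (xs m)) z"
  have p0: "p \<ge> 0" unfolding p_def by simp
  define S where "S k \<longleftrightarrow> (\<forall>zs. measure M {\<omega>\<in>space M. (\<forall>i\<le>m. X i \<omega> = xs i) \<and> (\<forall>i<k. Z i \<omega> = zs i) \<and> Z m \<omega> = z}
     = measure M {\<omega>\<in>space M. (\<forall>i\<le>m. X i \<omega> = xs i) \<and> (\<forall>i<k. Z i \<omega> = zs i)} * p)" for k
  have "S 0"
  proof (rule inc_induct[of 0 m])
    show "S m" unfolding S_def p_def by (intro allI Zstep)
  next
    fix k assume k: "k < m" and IH: "S (Suc k)"
    show "S k" unfolding S_def
    proof
      fix zs
      define Ak where "Ak = {\<omega>\<in>space M. (\<forall>i\<le>m. X i \<omega> = xs i) \<and> (\<forall>i<k. Z i \<omega> = zs i)}"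
      have mA: "Ak \<in> sets M" unfolding Ak_def by measurable
      have e1: "{\<omega>\<in>space M. ((\<forall>i\<le>m. X i \<omega> = xs i) \<and> (\<forall>i<k. Z i \<omega> = zs i) \<and> Z m \<omega> = z) \<and> Z k \<omega> = w}
        = {\<omega>\<in>space M. (\<forall>i\<le>m. X i \<omega> = xs i) \<and> (\<forall>i<Suc k. Z i \<omega> = (zs(k:=w)) i) \<and> Z m \<omega> = z}" for w
        by (auto simp: less_Suc_eq)
      have e2: "{\<omega>\<in>space M. ((\<forall>i\<le>m. X i \<omega> = xs i) \<and> (\<forall>i<k. Z i \<omega> = zs i)) \<and> Z k \<omega> = w}
        = {\<omega>\<in>space M. (\<forall>i\<le>m. X i \<omega> = xs i) \<and> (\<forall>i<Suc k. Z i \<omega> = (zs(k:=w)) i)}" for w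
        by (auto simp: less_Suc_eq)
      have "emeasure M {\<omega>\<in>space M. (\<forall>i\<le>m. X i \<omega> = xs i) \<and> (\<forall>i<k. Z i \<omega> = zs i) \<and> Z m \<omega> = z}
          = (\<integral>\<^sup>+w. emeasure M {\<omega>\<in>space M. ((\<forall>i\<le>m. X i \<omega> = xs i) \<and> (\<forall>i<k. Z i \<omega> = zs i) \<and> Z m \<omega> = z) \<and> Z k \<omega> = w} \<partial>count_space UNIV)"
        by (rule split_Z) measurable
      also have "\<dots> = (\<integral>\<^sup>+w. emeasure M {\<omega>\<in>space M. (\<forall>i\<le>m. X i \<omega> = xs i) \<and> (\<forall>i<Suc k. Z i \<omega> = (zs(k:=w)) i) \<and> Z m \<omega> = z} \<partial>count_space UNIV)"
        by (simp only: e1)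
      also have "\<dots> = (\<integral>\<^sup>+w. emeasure M {\<omega>\<in>space M. (\<forall>i\<le>m. X i \<omega> = xs i) \<and> (\<forall>i<Suc k. Z i \<omega> = (zs(k:=w)) i)} * ennreal p \<partial>count_space UNIV)"
        using IH p0 unfolding S_def by (simp add: emeasure_eq_measure ennreal_mult)
      also have "\<dots> = (\<integral>\<^sup>+w. emeasure M {\<omega>\<in>space M. (\<forall>i\<le>m. X i \<omega> = xs i) \<and> (\<forall>i<Suc k. Z i \<omega> = (zs(k:=w)) i)} \<partial>count_space UNIV) * ennreal p"
        by (rule nn_integral_multc) simp
      also have "(\<integral>\<^sup>+w. emeasure M {\<omega>\<in>space M. (\<forall>i\<le>m. X i \<omega> = xs i) \<and> (\<forall>i<Suc k. Z i \<omega> = (zs(k:=w)) i)} \<partial>count_space UNIV) = emeasure M Ak"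
      proof -
        have "emeasure M Ak = (\<integral>\<^sup>+w. emeasure M {\<omega>\<in>space M. ((\<forall>i\<le>m. X i \<omega> = xs i) \<and> (\<forall>i<k. Z i \<omega> = zs i)) \<and> Z k \<omega> = w} \<partial>count_space UNIV)"
          unfolding Ak_def by (rule split_Z) measurable
        then show ?thesis by (simp only: e2)
      qed
      finally have "ennreal (measure M {\<omega>\<in>space M. (\<forall>i\<le>m. X i \<omega> = xs i) \<and> (\<forall>i<k. Z i \<omega> = zs i) \<and> Z m \<omega> = z})
          = ennreal (measure M Ak * p)"
        by (simp add: emeasure_eq_measure ennreal_mult p0)
      then show "measure M {\<omega>\<in>space M. (\<forall>i\<le>m. X i \<omega> = xs i) \<and> (\<forall>i<k. Z i \<omega> = zs i) \<and> Z m \<omega> = z}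
          = measure M {\<omega>\<in>space M. (\<forall>i\<le>m. X i \<omega> = xs i) \<and> (\<forall>i<k. Z i \<omega> = zs i)} * p"
        unfolding Ak_def using p0 by (subst (asm) ennreal_inj) auto
    qed
  qed simp
  then show ?thesis unfolding S_def p_def by simp
qed


lemma Xfac: "measure M {\<omega>\<in>space M. (\<forall>i\<le>n. X i \<omega> = xs i) \<and> X (Suc n) \<omega> = y}
   = measure M {\<omega>\<in>space M. \<forall>i\<le>n. X i \<omega> = xs i} * P (xs n) y"
proof -
  have e1: "{\<omega>\<in>space M. (\<forall>i\<le>n. X i \<omega> = xs i) \<and> X (Suc n) \<omega> = y}
     = {\<omega>\<in>space M. \<forall>i\<le>Suc n. X i \<omega> = (xs(Suc n := y)) i}"
    by (auto simp: le_Suc_eq)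
  have e2: "{\<omega>\<in>space M. \<forall>i\<le>n. X i \<omega> = xs i} = {\<omega>\<in>space M. \<forall>i\<le>n. X i \<omega> = (xs(Suc n := y)) i}"
    by auto
  show ?thesis unfolding e1 e2 Xstep by simp
qed

lemma MarkovC: "measure M {\<omega>\<in>space M. (\<forall>i\<le>n. X i \<omega> \<in> c i) \<and> X (Suc n) \<omega> = y}
   = (\<Sum>w\<in>UNIV. measure M {\<omega>\<in>space M. (\<forall>i\<le>n. X i \<omega> \<in> c i) \<and> X n \<omega> = w} * P w y)"
  by (rule Fac[where g="\<lambda>w. P w y"]) (measurable, rule Xfac)

lemma ZC: "measure M {\<omega>\<in>space M. (\<forall>i\<le>m. X i \<omega> \<in> c i) \<and> Z m \<omega> = z}
   = (\<Sum>w\<in>UNIV. measure M {\<omega>\<in>space M. (\<forall>i\<le>m. X i \<omega> \<in> c i) \<and> X m \<omega> = w} * pmf (r w) z)"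
  by (rule Fac[where g="\<lambda>w. pmf (r w) z"]) (measurable, rule ZA)

lemma P1:
  assumes stat: "stationary P \<pi>"
  shows "measure M {\<omega>\<in>space M. X n \<omega> = x} = \<pi> x"
proof (induction n arbitrary: x)
  case 0
  then show ?case by (rule X0)
next
  case (Suc n)
  have "measure M {\<omega>\<in>space M. X (Suc n) \<omega> = x}
     = measure M {\<omega>\<in>space M. (\<forall>i\<le>n. X i \<omega> \<in> UNIV) \<and> X (Suc n) \<omega> = x}" by simp
  also have "\<dots> = (\<Sum>w\<in>UNIV. measure M {\<omega>\<in>space M. (\<forall>i\<le>n. X i \<omega> \<in> UNIV) \<and> X n \<omega> = w} * P w x)"
    by (rule MarkovC)
  also have "\<dots> = (\<Sum>w\<in>UNIV. \<pi> w * P w x)" using Suc by simp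
  also have "\<dots> = \<pi> x" using stat unfolding stationary_def by metis
  finally show ?case .
qed

lemma P2:
  assumes "n \<le> m" and stat: "stationary P \<pi>"
  shows "measure M {\<omega>\<in>space M. X n \<omega> = x \<and> X m \<omega> = y} = \<pi> x * mpow P (m - n) x y"
  using assms(1)
proof (induction m arbitrary: y rule: dec_induct)
  case base
  show ?case
  proof (cases "x = y")
    case True
    then show ?thesis using P1[OF stat] by simp
  next
    case False
    then have "{\<omega>\<in>space M. X n \<omega> = x \<and> X n \<omega> = y} = {}" by auto
    then show ?thesis using False by (metis diff_self_eq_0 measure_empty mpow.simps(1) mult_zero_right)
  qed
next
  case (step m)
  define c where "c i = (if i = n then {x} else UNIV)" for i
  have e: "{\<omega>\<in>space M. X n \<omega> = x \<and> Q \<omega>} = {\<omega>\<in>space M. (\<forall>i\<le>m. X i \<omega> \<in> c i) \<and> Q \<omega>}" for Q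
    using step(1) unfolding c_def by auto
  have "measure M {\<omega>\<in>space M. X n \<omega> = x \<and> X (Suc m) \<omega> = y}
     = (\<Sum>w\<in>UNIV. measure M {\<omega>\<in>space M. X n \<omega> = x \<and> X m \<omega> = w} * P w y)"
    unfolding e by (rule MarkovC)
  also have "\<dots> = (\<Sum>w\<in>UNIV. \<pi> x * mpow P (m - n) x w * P w y)" using step(3) by simp
  also have "\<dots> = \<pi> x * mpow P (Suc m - n) x y"
    using step(1) by (simp add: Suc_diff_le sum_distrib_left mult.assoc)
  finally show ?case .
qed

lemma P3:
  assumes "n \<le> m" and stat: "stationary P \<pi>"
  shows "measure M {\<omega>\<in>space M. X n \<omega> = x \<and> Z m \<omega> = z}
     = (\<Sum>w\<in>UNIV. \<pi> x * mpow P (m - n) x w * pmf (r w) z)"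
proof -
  define c where "c i = (if i = n then {x} else UNIV)" for i
  have e: "{\<omega>\<in>space M. X n \<omega> = x \<and> Q \<omega>} = {\<omega>\<in>space M. (\<forall>i\<le>m. X i \<omega> \<in> c i) \<and> Q \<omega>}" for Q
    using assms(1) unfolding c_def by auto
  show ?thesis unfolding e ZC unfolding e[symmetric] P2[OF assms] ..
qed

lemma P4:
  assumes stat: "stationary P \<pi>"
  shows "measure M {\<omega>\<in>space M. Z m \<omega> = z} = (\<Sum>w\<in>UNIV. \<pi> w * pmf (r w) z)"
proof -
  have "measure M {\<omega>\<in>space M. Z m \<omega> = z} = measure M {\<omega>\<in>space M. (\<forall>i\<le>m. X i \<omega> \<in> UNIV) \<and> Z m \<omega> = z}"
    by simp
  also have "\<dots> = (\<Sum>w\<in>UNIV. \<pi> w * pmf (r w) z)" unfolding ZC using P1[OF stat] by simp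
  finally show ?thesis .
qed

end

theorem theorem2:
  fixes M :: "'a measure" and P :: "'x::finite \<Rightarrow> 'x \<Rightarrow> real" and \<pi> :: "'x \<Rightarrow> real"
    and r :: "'x \<Rightarrow> 'z::countable pmf" and X :: "nat \<Rightarrow> 'a \<Rightarrow> 'x" and Z :: "nat \<Rightarrow> 'a \<Rightarrow> 'z"
    and lam :: "nat \<Rightarrow> real" and f :: "nat \<Rightarrow> 'x \<Rightarrow> real"
  defines "K \<equiv> CARD('x)"
  defines "lamstar \<equiv> Max {\<bar>lam j\<bar> | j. 2 \<le> j \<and> j \<le> K}"
  defines "R \<equiv> (\<Sum>\<^sub>\<infinity>z\<in>{z. (\<Sum>y\<in>UNIV. \<pi> y * pmf (r y) z) > 0}.
                  (\<Sum>y\<in>UNIV. \<pi> y * (pmf (r y) z)\<^sup>2) / (\<Sum>y\<in>UNIV. \<pi> y * pmf (r y) z))"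
  assumes stoch: "stochastic P"
    and irred: "irreducible P"
    and aper: "aperiodic P"
    and stat: "stationary P \<pi>"
    and rev: "reversible P \<pi>"
    and model: "markov_modulated M P \<pi> r X Z"
    and lam1: "lam 1 = 1" and f1: "f 1 = (\<lambda>_. 1)"
    and lam_sorted: "\<And>i j. 1 \<le> i \<Longrightarrow> i \<le> j \<Longrightarrow> j \<le> K \<Longrightarrow> lam j \<le> lam i"
    and lamK: "lam K > -1"
    and eigen: "\<And>j x. 1 \<le> j \<Longrightarrow> j \<le> K \<Longrightarrow> (\<Sum>y\<in>UNIV. P x y * f j y) = lam j * f j x"
    and orthonormal: "\<And>i j. 1 \<le> i \<Longrightarrow> i \<le> K \<Longrightarrow> 1 \<le> j \<Longrightarrow> j \<le> K \<Longrightarrow>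
          (\<Sum>x\<in>UNIV. \<pi> x * f i x * f j x) = (if i = j then 1 else 0)"
  shows "1 \<le> R \<and> R \<le> real K
    \<and> (\<forall>x n L. predictability M X Z n L x
          \<le> 1/2 * sqrt (\<Sum>j=2..K. lam j ^ (2*L) * (f j x)\<^sup>2) * sqrt 2 * sqrt (R - 1))
    \<and> (\<forall>x n L. predictability M X Z n L x
          \<le> 1/2 * lamstar ^ L * sqrt (1 / \<pi> x - 1) * sqrt 2 * sqrt (R - 1))"
  proof -
  interpret mm M P \<pi> r X Z by unfold_locales (rule model)
  have pos: "\<pi> y > 0" for y by (rule pi_pos[OF stoch irred stat])
  have s1: "(\<Sum>y\<in>UNIV. \<pi> y) = 1" using stat unfolding stationary_def by blast
  have K1: "1 \<le> K" unfolding K_def by (simp add: Suc_le_eq)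
  have split1: "{1..K} = insert 1 {2..K}" using K1 by auto
  have hexp: "mpow P L x y = \<pi> y * (1 + (\<Sum>j\<in>{2..K}. lam j ^ L * f j x * f j y))" for L x y
  proof -
    define g where "g y = mpow P L x y / \<pi> y" for y
    have "g y = (\<Sum>j=1..K. (\<Sum>y'\<in>UNIV. \<pi> y' * g y' * f j y') * f j y)"
      by (rule expand[OF pos K_def[THEN meta_eq_to_obj_eq] orthonormal])
    also have "\<dots> = (\<Sum>j=1..K. lam j ^ L * f j x * f j y)"
    proof (rule sum.cong[OF refl])
      fix j assume j: "j \<in> {1..K}"
      have "(\<Sum>y'\<in>UNIV. \<pi> y' * g y' * f j y') = (\<Sum>y'\<in>UNIV. mpow P L x y' * f j y')"
        unfolding g_def using pos by (intro sum.cong refl) (simp add: less_imp_neq[symmetric])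
      also have "\<dots> = lam j ^ L * f j x"
        by (rule eigen_iter) (use eigen j in auto)
      finally show "(\<Sum>y'\<in>UNIV. \<pi> y' * g y' * f j y') * f j y = lam j ^ L * f j x * f j y" by simp
    qed
    also have "\<dots> = 1 + (\<Sum>j\<in>{2..K}. lam j ^ L * f j x * f j y)"
    proof -
      have l1: "lam (Suc 0) = 1" using lam1 by simp
      have f1': "f (Suc 0) x' = 1" for x' using f1 by simp
      show ?thesis unfolding split1 by (simp add: l1 f1')
    qed
    finally show ?thesis unfolding g_def using pos[of y]
      by (simp add: divide_eq_eq mult.commute)
  qed
  define H where "H L x = (\<Sum>j\<in>{2..K}. (lam j ^ L * f j x)\<^sup>2)" for L x
  define h where "h L x y = (\<Sum>j\<in>{2..K}. lam j ^ L * f j x * f j y)" for L x y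
  have orth2: "\<And>i j. i \<in> {2..K} \<Longrightarrow> j \<in> {2..K} \<Longrightarrow> (\<Sum>x\<in>UNIV. \<pi> x * f i x * f j x) = (if i = j then 1 else 0)"
    using orthonormal by auto
  have hH: "(\<Sum>y\<in>UNIV. \<pi> y * (h L x y)\<^sup>2) = H L x" for L x
    unfolding h_def H_def by (rule ortho_quad[OF _ orth2]) auto
  have h0: "(\<Sum>y\<in>UNIV. \<pi> y * h L x y) = 0" for L x
  proof -
    have "(\<Sum>y\<in>UNIV. \<pi> y * h L x y) = (\<Sum>j\<in>{2..K}. lam j ^ L * f j x * (\<Sum>y\<in>UNIV. \<pi> y * f 1 y * f j y))"
    proof -
      have "(\<Sum>y\<in>UNIV. \<pi> y * h L x y) = (\<Sum>y\<in>UNIV. \<Sum>j\<in>{2..K}. lam j ^ L * f j x * (\<pi> y * f 1 y * f j y))"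
        unfolding h_def f1 by (simp add: sum_distrib_left mult_ac)
      also have "\<dots> = (\<Sum>j\<in>{2..K}. \<Sum>y\<in>UNIV. lam j ^ L * f j x * (\<pi> y * f 1 y * f j y))"
        by (rule sum.swap)
      also have "\<dots> = (\<Sum>j\<in>{2..K}. lam j ^ L * f j x * (\<Sum>y\<in>UNIV. \<pi> y * f 1 y * f j y))"
        by (simp add: sum_distrib_left)
      finally show ?thesis .
    qed
    also have "\<dots> = 0" using orthonormal K1 by (intro sum.neutral) auto
    finally show ?thesis .
  qed
  have pix: "1 / \<pi> x - 1 = (\<Sum>j\<in>{2..K}. (f j x)\<^sup>2)" for x
  proof -
    have "1 = \<pi> x * (1 + (\<Sum>j\<in>{2..K}. (f j x)\<^sup>2))" using hexp[of 0 x x] by (simp add: power2_eq_square)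
    then show ?thesis using pos[of x] by (simp add: field_simps)
  qed
  define q where "q z = (\<Sum>y\<in>UNIV. \<pi> y * pmf (r y) z)" for z
  have tv: "1 \<le> R \<and> R \<le> real K \<and> infsum (\<lambda>z. \<bar>\<Sum>y\<in>UNIV. \<pi> y * h L x y * pmf (r y) z\<bar>) UNIV \<le> sqrt (H L x) * sqrt (R - 1)" for L x
    using tv_main[OF pos s1 h0, of r] unfolding hH R_def K_def by blast
  have pred: "predictability M X Z n L x \<le> 1/2 * sqrt (H L x) * sqrt (R - 1)" for n L x
  proof -
    have "predictability M X Z n L x = 1/2 * infsum (\<lambda>z. \<bar>\<Sum>y\<in>UNIV. \<pi> y * h L x y * pmf (r y) z\<bar>) UNIV"
    proof -
      have "measure M {\<omega>\<in>space M. X n \<omega> = x \<and> Z (n+L) \<omega> = z} / measure M {\<omega>\<in>space M. X n \<omega> = x}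
         - measure M {\<omega>\<in>space M. Z (n+L) \<omega> = z} = (\<Sum>y\<in>UNIV. \<pi> y * h L x y * pmf (r y) z)" for z
      proof -
        have "measure M {\<omega>\<in>space M. X n \<omega> = x \<and> Z (n+L) \<omega> = z} / measure M {\<omega>\<in>space M. X n \<omega> = x}
            = (\<Sum>w\<in>UNIV. \<pi> x * mpow P L x w * pmf (r w) z) / \<pi> x"
          using P3[of n "n+L" x z, OF _ stat] P1[OF stat] by simp
        also have "\<dots> = (\<Sum>w\<in>UNIV. mpow P L x w * pmf (r w) z)"
          using pos[of x] by (simp add: sum_divide_distrib)
        also have "\<dots> = (\<Sum>w\<in>UNIV. \<pi> w * pmf (r w) z) + (\<Sum>w\<in>UNIV. \<pi> w * h L x w * pmf (r w) z)"
          unfolding hexp h_def by (simp add: algebra_simps sum.distrib)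
        finally show ?thesis using P4[OF stat] by simp
      qed
      then show ?thesis unfolding predictability_def by simp
    qed
    also have "\<dots> \<le> 1/2 * (sqrt (H L x) * sqrt (R - 1))" using tv[of L x] by simp
    finally show ?thesis by simp
  qed
  have R1: "1 \<le> R" and RK: "R \<le> real K" using tv[of 0 undefined] by auto
  have sq2: "sqrt 2 \<ge> (1::real)" by simp
  have s2le: "1/2 * sqrt (H L x) * sqrt (R - 1) \<le> 1/2 * sqrt (H L x) * sqrt 2 * sqrt (R - 1)" for L x
  proof -
    have "0 \<le> H L x" unfolding H_def by (simp add: sum_nonneg)
    then have a0: "0 \<le> 1/2 * sqrt (H L x) * sqrt (R - 1)" using R1 by simp
    have "1/2 * sqrt (H L x) * sqrt (R - 1) * 1 \<le> 1/2 * sqrt (H L x) * sqrt (R - 1) * sqrt 2"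
      by (rule mult_left_mono[OF sq2 a0])
    then show ?thesis by (simp add: mult_ac)
  qed
  have b1: "predictability M X Z n L x
          \<le> 1/2 * sqrt (\<Sum>j=2..K. lam j ^ (2*L) * (f j x)\<^sup>2) * sqrt 2 * sqrt (R - 1)" for x n L
  proof -
    have "H L x = (\<Sum>j=2..K. lam j ^ (2*L) * (f j x)\<^sup>2)"
      unfolding H_def by (intro sum.cong refl) (simp add: power_mult_distrib mult.commute[of 2 L] power_mult)
    moreover have "1/2 * sqrt (H L x) * sqrt (R - 1) \<le> 1/2 * sqrt (H L x) * sqrt 2 * sqrt (R - 1)"
      by (rule s2le)
    ultimately show ?thesis using pred[of n L x] by simp
  qed
  have b2: "predictability M X Z n L x
          \<le> 1/2 * lamstar ^ L * sqrt (1 / \<pi> x - 1) * sqrt 2 * sqrt (R - 1)" for x n L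
  proof -
    have Hle: "sqrt (H L x) \<le> lamstar ^ L * sqrt (1 / \<pi> x - 1)"
    proof (cases "K < 2")
      case True
      then have "{2..K} = {}" by auto
      then show ?thesis unfolding H_def pix by simp
    next
      case False
      define S where "S = {\<bar>lam j\<bar> | j. 2 \<le> j \<and> j \<le> K}"
      have finS: "finite S" unfolding S_def by simp
      have le: "\<bar>lam j\<bar> \<le> lamstar" if "j \<in> {2..K}" for j
        unfolding lamstar_def using that finS by (intro Max_ge) (auto simp: S_def)
      have ls0: "lamstar \<ge> 0" using le[of 2] False by force
      have "H L x \<le> (\<Sum>j\<in>{2..K}. (lamstar ^ L)\<^sup>2 * (f j x)\<^sup>2)"
        unfolding H_def
      proof (rule sum_mono)
        fix j assume j: "j \<in> {2..K}"
        have "\<bar>lam j\<bar> ^ L \<le> lamstar ^ L" using le[OF j] by (simp add: power_mono)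
        then have "(lam j ^ L)\<^sup>2 \<le> (lamstar ^ L)\<^sup>2"
          by (metis abs_ge_zero power_abs power2_abs power_mono)
        then show "(lam j ^ L * f j x)\<^sup>2 \<le> (lamstar ^ L)\<^sup>2 * (f j x)\<^sup>2"
          by (simp add: power_mult_distrib mult_right_mono)
      qed
      also have "\<dots> = (lamstar ^ L)\<^sup>2 * (1 / \<pi> x - 1)" unfolding pix by (simp add: sum_distrib_left)
      finally have "sqrt (H L x) \<le> sqrt ((lamstar ^ L)\<^sup>2 * (1 / \<pi> x - 1))" by (rule real_sqrt_le_mono)
      also have "\<dots> = lamstar ^ L * sqrt (1 / \<pi> x - 1)" using ls0 by (simp add: real_sqrt_mult)
      finally show ?thesis .
    qed
    have "predictability M X Z n L x \<le> 1/2 * sqrt (H L x) * sqrt 2 * sqrt (R - 1)"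
      using pred[of n L x] s2le[of L x] by linarith
    also have "\<dots> \<le> 1/2 * (lamstar ^ L * sqrt (1 / \<pi> x - 1)) * sqrt 2 * sqrt (R - 1)"
    proof -
      have c0: "0 \<le> 1/2 * sqrt 2 * sqrt (R - 1)" using R1 by simp
      have "sqrt (H L x) * (1/2 * sqrt 2 * sqrt (R - 1)) \<le> (lamstar ^ L * sqrt (1 / \<pi> x - 1)) * (1/2 * sqrt 2 * sqrt (R - 1))"
        by (rule mult_right_mono[OF Hle c0])
      then show ?thesis by (simp add: mult_ac)
    qed
    finally show ?thesis by (simp add: mult.assoc)
  qed
  show ?thesis using R1 RK b1 b2 by blast
qed

end
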